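(* Let $R$ be a finite local commutative ring, $K\le R^\times$ a pure group, and $\mathcal C=\mathrm{Cyc}(K,R)$. Let $I_0=\{x\in\mathrm{rad}(R): x\,\mathrm{rad}(R)=\{0\}\}$, $U_0=K\cap(1+I_0)$, and let $E_0$ be the equivalence relation on $R$ whose classes are the cosets of $I_0$. Then $\mathcal C_{E_0}\ge\mathrm{Cyc}(U_0,R)$.
   Context: All rings have an identity; $\mathrm{rad}(R)$ is the unique maximal ideal of the local ring $R$. A scheme (coherent configuration) on a finite set $V$ is a pair $(V,\mathcal R)$ where $\mathcal R$ is a partition of $V\times V$ into nonempty relations, closed under transposition, such that the diagonal $\Delta(V)$ is a union of members of $\mathcal R$, and for $R_1,R_2,T\in\mathcal R$ the number $|\{y:(x,y)\in R_1,(y,z)\in R_2\}|$ is the same for all $(x,z)\in T$. Elements of $\mathcal R$ are basis relations; unions of them are relations ($\mathcal R^*$). For schemes on $V$, $\mathcal C\le\mathcal C'$ means every relation of $\mathcal C$ is a relation of $\mathcal C'$. For an equivalence relation $E$ on $V$, $\mathcal C_E$ is the smallest scheme on $V$ that is $\ge\mathcal C$ and has $\Delta(X)=\{(x,x):x\in X\}$ as a relation for every class $X$ of $E$. For $K\le R^\times$, $\mathrm{Cyc}(K,R)$ is the scheme on $R$ whose basis relations are $\{(x,y): y-x\in rK\}$, $r\in R$. A group $K\le R^\times$ is pure if the only ideal $I$ of $R$ with $1+I\subseteq K$ is $I=\{0\}$. *)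

theory Defs
  imports Main
begin

definition ring_ideal :: "'a::comm_ring_1 set \<Rightarrow> bool" where
  "ring_ideal I \<longleftrightarrow> 0 \<in> I \<and> (\<forall>x\<in>I. \<forall>y\<in>I. x + y \<in> I) \<and>
     (\<forall>x\<in>I. -x \<in> I) \<and> (\<forall>r. \<forall>x\<in>I. r * x \<in> I)"

definition maximal_ideal :: "'a::comm_ring_1 set \<Rightarrow> bool" where
  "maximal_ideal I \<longleftrightarrow> ring_ideal I \<and> I \<noteq> UNIV \<and>
     (\<forall>J. ring_ideal J \<and> I \<subseteq> J \<longrightarrow> J = I \<or> J = UNIV)"

definition local_ring :: "'a::comm_ring_1 itself \<Rightarrow> bool" where
  "local_ring _ \<longleftrightarrow> (\<exists>!I::'a set. maximal_ideal I)"

definition rad :: "'a::comm_ring_1 set" where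
  "rad = (THE I. maximal_ideal I)"

definition ring_units :: "'a::comm_ring_1 set" where
  "ring_units = {x. x dvd 1}"

definition unit_subgroup :: "'a::comm_ring_1 set \<Rightarrow> bool" where
  "unit_subgroup K \<longleftrightarrow> K \<subseteq> ring_units \<and> 1 \<in> K \<and> (\<forall>x\<in>K. \<forall>y\<in>K. x * y \<in> K) \<and>
     (\<forall>x\<in>K. \<exists>y\<in>K. x * y = 1)"

definition pure :: "'a::comm_ring_1 set \<Rightarrow> bool" where
  "pure K \<longleftrightarrow> (\<forall>I. ring_ideal I \<and> (\<lambda>x. 1 + x) ` I \<subseteq> K \<longrightarrow> I = {0})"

text \<open>A scheme on V is represented by its set of basis relations.\<close>
definition is_scheme :: "'a set \<Rightarrow> ('a \<times> 'a) set set \<Rightarrow> bool" where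
  "is_scheme V S \<longleftrightarrow>
     (\<forall>r\<in>S. r \<subseteq> V \<times> V \<and> r \<noteq> {}) \<and>
     (\<forall>r\<in>S. \<forall>s\<in>S. r \<noteq> s \<longrightarrow> r \<inter> s = {}) \<and>
     \<Union>S = V \<times> V \<and>
     (\<forall>r\<in>S. r\<inverse> \<in> S) \<and>
     (\<exists>T\<subseteq>S. \<Union>T = Id_on V) \<and>
     (\<forall>r1\<in>S. \<forall>r2\<in>S. \<forall>t\<in>S. \<exists>c. \<forall>(x,z)\<in>t.
        card {y. (x,y) \<in> r1 \<and> (y,z) \<in> r2} = c)"

definition scheme_rels :: "('a \<times> 'a) set set \<Rightarrow> ('a \<times> 'a) set set" where
  "scheme_rels S = {\<Union>T | T. T \<subseteq> S}"

definition scheme_le :: "('a \<times> 'a) set set \<Rightarrow> ('a \<times> 'a) set set \<Rightarrow> bool" where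
  "scheme_le C C' \<longleftrightarrow> scheme_rels C \<subseteq> scheme_rels C'"

definition scheme_ext :: "'a set \<Rightarrow> ('a \<times> 'a) set set \<Rightarrow> ('a \<times> 'a) set \<Rightarrow> ('a \<times> 'a) set set" where
  "scheme_ext V C E = (THE D. is_scheme V D \<and> scheme_le C D \<and>
      (\<forall>X\<in>V // E. Id_on X \<in> scheme_rels D) \<and>
      (\<forall>D'. is_scheme V D' \<and> scheme_le C D' \<and> (\<forall>X\<in>V // E. Id_on X \<in> scheme_rels D')
             \<longrightarrow> scheme_le D D'))"

text \<open>Cyc(K,R) on the whole ring (the universe of the type).\<close>
definition Cyc :: "'a::comm_ring_1 set \<Rightarrow> ('a \<times> 'a) set set" where
  "Cyc K = {{(x,y). y - x \<in> (\<lambda>k. r * k) ` K} | r. True}"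

end

theory Submission
  imports Defs
begin


definition cnt :: "('a \<times> 'a) set \<Rightarrow> ('a \<times> 'a) set \<Rightarrow> nat \<Rightarrow> ('a \<times> 'a) set" where
  "cnt r s k = {(x,z). card {y. (x,y) \<in> r \<and> (y,z) \<in> s} = k}"

definition cc :: "('a \<times> 'a) set set \<Rightarrow> bool" where
  "cc A \<longleftrightarrow> {} \<in> A \<and> Id \<in> A \<and> (\<forall>r\<in>A. - r \<in> A) \<and> (\<forall>r\<in>A. \<forall>s\<in>A. r \<union> s \<in> A) \<and>
     (\<forall>r\<in>A. r\<inverse> \<in> A) \<and> (\<forall>r\<in>A. \<forall>s\<in>A. \<forall>k. cnt r s k \<in> A)"

definition atoms :: "('a \<times> 'a) set set \<Rightarrow> ('a \<times> 'a) set set" where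
  "atoms A = {t \<in> A. t \<noteq> {} \<and> (\<forall>s\<in>A. t \<subseteq> s \<or> t \<inter> s = {})}"

lemma cc_compl: "cc A \<Longrightarrow> r \<in> A \<Longrightarrow> - r \<in> A" by (simp add: cc_def)
lemma cc_un: "cc A \<Longrightarrow> r \<in> A \<Longrightarrow> s \<in> A \<Longrightarrow> r \<union> s \<in> A" by (simp add: cc_def)
lemma cc_empty: "cc A \<Longrightarrow> {} \<in> A" by (simp add: cc_def)
lemma cc_univ: "cc A \<Longrightarrow> UNIV \<in> A" by (metis cc_compl cc_empty Compl_empty_eq)
lemma cc_int: "cc A \<Longrightarrow> r \<in> A \<Longrightarrow> s \<in> A \<Longrightarrow> r \<inter> s \<in> A"
proof -
  assume a: "cc A" "r \<in> A" "s \<in> A"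
  have "r \<inter> s = - (- r \<union> - s)" by auto
  thus ?thesis using a cc_compl cc_un by metis
qed
lemma cc_conv: "cc A \<Longrightarrow> r \<in> A \<Longrightarrow> r\<inverse> \<in> A" by (simp add: cc_def)
lemma cc_cnt: "cc A \<Longrightarrow> r \<in> A \<Longrightarrow> s \<in> A \<Longrightarrow> cnt r s k \<in> A" by (simp add: cc_def)

lemma cc_Union:
  fixes F :: "('a::finite \<times> 'a) set set"
  assumes "cc A" "F \<subseteq> A" shows "\<Union>F \<in> A"
proof -
  have "finite F" by simp
  thus ?thesis using assms(2)
  proof (induction F rule: finite_induct)
    case empty thus ?case using cc_empty[OF assms(1)] by simp
  next
    case (insert x F) thus ?case using cc_un[OF assms(1)] by simp
  qed
qed

lemma cc_Inter:
  fixes F :: "('a::finite \<times> 'a) set set"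
  assumes "cc A" "F \<subseteq> A" shows "\<Inter>F \<in> A"
proof -
  have "finite F" by simp
  thus ?thesis using assms(2)
  proof (induction F rule: finite_induct)
    case empty thus ?case using cc_univ[OF assms(1)] by simp
  next
    case (insert x F) thus ?case using cc_int[OF assms(1)] by simp
  qed
qed

lemma cc_comp:
  fixes r :: "('a::finite \<times> 'a) set"
  assumes "cc A" "r \<in> A" "s \<in> A" shows "r O s \<in> A"
proof -
  have "r O s = - cnt r s 0" unfolding cnt_def by auto
  thus ?thesis using assms cc_cnt cc_compl by metis
qed

lemma atom_ex:
  fixes A :: "('a::finite \<times> 'a) set set"
  assumes "cc A" shows "\<exists>t\<in>atoms A. p \<in> t"
proof -
  let ?t = "\<Inter>{s\<in>A. p \<in> s}"
  have tA: "?t \<in> A" using cc_Inter[OF assms, of "{s\<in>A. p \<in> s}"] by blast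
  have "\<forall>s\<in>A. ?t \<subseteq> s \<or> ?t \<inter> s = {}"
  proof
    fix s assume s: "s \<in> A"
    show "?t \<subseteq> s \<or> ?t \<inter> s = {}"
    proof (cases "p \<in> s")
      case True thus ?thesis using s by blast
    next
      case False
      hence "?t \<subseteq> - s" using cc_compl[OF assms s] by blast
      thus ?thesis by blast
    qed
  qed
  moreover have "p \<in> ?t" by blast
  ultimately show ?thesis using tA unfolding atoms_def by blast
qed

lemma rels_atoms:
  fixes A :: "('a::finite \<times> 'a) set set"
  assumes "cc A" shows "scheme_rels (atoms A) = A"
proof
  show "scheme_rels (atoms A) \<subseteq> A"
    unfolding scheme_rels_def using cc_Union[OF assms] unfolding atoms_def by blast
next
  show "A \<subseteq> scheme_rels (atoms A)"
  proof
    fix s assume s: "s \<in> A"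
    have "s = \<Union>{t \<in> atoms A. t \<subseteq> s}"
    proof
      show "s \<subseteq> \<Union>{t \<in> atoms A. t \<subseteq> s}"
      proof
        fix p assume p: "p \<in> s"
        obtain t where t: "t \<in> atoms A" "p \<in> t" using atom_ex[OF assms] by blast
        hence "t \<subseteq> s" using s p unfolding atoms_def by blast
        thus "p \<in> \<Union>{t \<in> atoms A. t \<subseteq> s}" using t by blast
      qed
    qed blast
    thus "s \<in> scheme_rels (atoms A)" unfolding scheme_rels_def by blast
  qed
qed

lemma IdU: "Id_on UNIV = Id" by auto

lemma atoms_disj: "r \<in> atoms A \<Longrightarrow> s \<in> atoms A \<Longrightarrow> r \<noteq> s \<Longrightarrow> r \<inter> s = {}"
proof -
  assume r: "r \<in> atoms A" and s: "s \<in> atoms A" and ne: "r \<noteq> s"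
  have 1: "r \<subseteq> s \<or> r \<inter> s = {}" using r s unfolding atoms_def by blast
  have 2: "s \<subseteq> r \<or> s \<inter> r = {}" using r s unfolding atoms_def by blast
  have 3: "r \<noteq> {}" "s \<noteq> {}" using r s unfolding atoms_def by auto
  show ?thesis using 1 2 3 ne by (metis inf.absorb_iff2 inf.orderE inf_commute)
qed

lemma scheme_atoms:
  fixes A :: "('a::finite \<times> 'a) set set"
  assumes "cc A" shows "is_scheme UNIV (atoms A)"
  unfolding is_scheme_def
proof (intro conjI)
  show "\<forall>r\<in>atoms A. r \<subseteq> UNIV \<times> UNIV \<and> r \<noteq> {}" unfolding atoms_def by simp
  show "\<forall>r\<in>atoms A. \<forall>s\<in>atoms A. r \<noteq> s \<longrightarrow> r \<inter> s = {}" using atoms_disj by metis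
  show "\<Union>(atoms A) = UNIV \<times> UNIV"
  proof (rule set_eqI)
    fix p :: "'a \<times> 'a"
    obtain t where "t \<in> atoms A" "p \<in> t" using atom_ex[OF assms] by blast
    thus "p \<in> \<Union>(atoms A) \<longleftrightarrow> p \<in> UNIV \<times> UNIV" by auto
  qed
  show "\<forall>r\<in>atoms A. r\<inverse> \<in> atoms A"
  proof
    fix r assume r: "r \<in> atoms A"
    have rA: "r \<in> A" "r \<noteq> {}" using r unfolding atoms_def by auto
    have "\<forall>s\<in>A. r\<inverse> \<subseteq> s \<or> r\<inverse> \<inter> s = {}"
    proof
      fix s assume "s \<in> A"
      hence "s\<inverse> \<in> A" using cc_conv[OF assms] by blast
      hence "r \<subseteq> s\<inverse> \<or> r \<inter> s\<inverse> = {}" using r unfolding atoms_def by blast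
      thus "r\<inverse> \<subseteq> s \<or> r\<inverse> \<inter> s = {}" by auto
    qed
    moreover have "r\<inverse> \<in> A" using cc_conv[OF assms rA(1)] .
    moreover have "r\<inverse> \<noteq> {}" using rA(2) by auto
    ultimately show "r\<inverse> \<in> atoms A" unfolding atoms_def by simp
  qed
  have "Id \<in> scheme_rels (atoms A)" using rels_atoms[OF assms] assms unfolding cc_def by simp
  then obtain T where T: "T \<subseteq> atoms A" "Id = \<Union>T" unfolding scheme_rels_def by blast
  have "\<Union>T = Id_on UNIV" by (simp add: T(2)[symmetric] IdU)
  thus "\<exists>T\<subseteq>atoms A. \<Union>T = Id_on UNIV" using T(1) by blast
  show "\<forall>r1\<in>atoms A. \<forall>r2\<in>atoms A. \<forall>t\<in>atoms A. \<exists>c. \<forall>(x,z)\<in>t.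
        card {y. (x,y) \<in> r1 \<and> (y,z) \<in> r2} = c"
  proof (intro ballI)
    fix r1 r2 t assume r: "r1 \<in> atoms A" "r2 \<in> atoms A" "t \<in> atoms A"
    have rA: "r1 \<in> A" "r2 \<in> A" using r unfolding atoms_def by simp_all
    have "t \<noteq> {}" using r(3) unfolding atoms_def by simp
    then obtain p0 where "p0 \<in> t" by blast
    then obtain x0 z0 where p: "(x0,z0) \<in> t" by (cases p0) simp
    let ?c = "card {y. (x0,y) \<in> r1 \<and> (y,z0) \<in> r2}"
    have "cnt r1 r2 ?c \<in> A" using cc_cnt[OF assms rA] .
    moreover have "(x0,z0) \<in> cnt r1 r2 ?c" unfolding cnt_def by simp
    moreover have "\<forall>s\<in>A. t \<subseteq> s \<or> t \<inter> s = {}" using r(3) unfolding atoms_def by simp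
    ultimately have "t \<subseteq> cnt r1 r2 ?c" using p by blast
    hence "\<forall>(x,z)\<in>t. card {y. (x,y) \<in> r1 \<and> (y,z) \<in> r2} = ?c" unfolding cnt_def by auto
    thus "\<exists>c. \<forall>(x,z)\<in>t. card {y. (x,y) \<in> r1 \<and> (y,z) \<in> r2} = c" by (rule exI)
  qed
qed




lemma scheme_finite: "finite (D :: ('a::finite \<times> 'a) set set)" by simp

lemma sch_disj: "is_scheme V D \<Longrightarrow> \<forall>r\<in>D. \<forall>s\<in>D. r \<noteq> s \<longrightarrow> r \<inter> s = {}"
  unfolding is_scheme_def by (elim conjE) assumption
lemma sch_cov: "is_scheme V D \<Longrightarrow> \<Union>D = V \<times> V"
  unfolding is_scheme_def by (elim conjE) assumption
lemma sch_conv: "is_scheme V D \<Longrightarrow> \<forall>r\<in>D. r\<inverse> \<in> D"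
  unfolding is_scheme_def by (elim conjE) assumption
lemma sch_id: "is_scheme V D \<Longrightarrow> \<exists>T\<subseteq>D. \<Union>T = Id_on V"
  unfolding is_scheme_def by (elim conjE) assumption
lemma sch_cst: "is_scheme V D \<Longrightarrow> \<forall>r1\<in>D. \<forall>r2\<in>D. \<forall>t\<in>D. \<exists>c. \<forall>(x,z)\<in>t.
        card {y. (x,y) \<in> r1 \<and> (y,z) \<in> r2} = c"
  unfolding is_scheme_def by (elim conjE) assumption
lemma sch_ne0: "is_scheme V D \<Longrightarrow> \<forall>r\<in>D. r \<subseteq> V \<times> V \<and> r \<noteq> {}"
  unfolding is_scheme_def by (elim conjE) assumption
lemma sch_ne: "is_scheme V D \<Longrightarrow> \<forall>r\<in>D. r \<noteq> {}"
  using sch_ne0 by blast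

lemma count_const:
  fixes D :: "('a::finite \<times> 'a) set set"
  assumes sch: "is_scheme UNIV D" and T: "T1 \<subseteq> D" "T2 \<subseteq> D" and t: "t \<in> D"
    and p: "(x,z) \<in> t" "(x',z') \<in> t"
  shows "card {y. (x,y) \<in> \<Union>T1 \<and> (y,z) \<in> \<Union>T2} = card {y. (x',y) \<in> \<Union>T1 \<and> (y,z') \<in> \<Union>T2}"
proof -
  have disj: "\<forall>r\<in>D. \<forall>s\<in>D. r \<noteq> s \<longrightarrow> r \<inter> s = {}" using sch_disj[OF sch] .
  have cst: "\<forall>r1\<in>D. \<forall>r2\<in>D. \<forall>t\<in>D. \<exists>c. \<forall>(x,z)\<in>t.
        card {y. (x,y) \<in> r1 \<and> (y,z) \<in> r2} = c" using sch_cst[OF sch] .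
  define g :: "('a\<times>'a) set \<times> ('a\<times>'a) set \<Rightarrow> 'a \<Rightarrow> 'a \<Rightarrow> nat"
    where "g = (\<lambda>(a,b) x z. card {y. (x,y) \<in> a \<and> (y,z) \<in> b})"
  have dec: "card {y. (x,y) \<in> \<Union>T1 \<and> (y,z) \<in> \<Union>T2} = (\<Sum>q\<in>T1\<times>T2. g q x z)" for x z
  proof -
    let ?B = "\<lambda>q. {y. (x,y) \<in> fst q \<and> (y,z) \<in> snd q}"
    have e: "{y. (x,y) \<in> \<Union>T1 \<and> (y,z) \<in> \<Union>T2} = \<Union>(?B ` (T1\<times>T2))" by auto
    have "card (\<Union>(?B ` (T1\<times>T2))) = (\<Sum>q\<in>T1\<times>T2. card (?B q))"
    proof (rule card_UN_disjoint)
      show "finite (T1 \<times> T2)" by simp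
      show "\<forall>i\<in>T1 \<times> T2. finite (?B i)" by simp
      show "\<forall>i\<in>T1 \<times> T2. \<forall>j\<in>T1 \<times> T2. i \<noteq> j \<longrightarrow> ?B i \<inter> ?B j = {}"
      proof (intro ballI impI)
        fix i j assume ij: "i \<in> T1 \<times> T2" "j \<in> T1 \<times> T2" "i \<noteq> j"
        have inD: "fst i \<in> D" "snd i \<in> D" "fst j \<in> D" "snd j \<in> D"
          using ij(1,2) T by (auto simp: mem_Times_iff)
        show "?B i \<inter> ?B j = {}"
        proof (cases "fst i = fst j")
          case True
          hence "snd i \<noteq> snd j" using ij(3) by (simp add: prod_eq_iff)
          hence "snd i \<inter> snd j = {}" using disj inD by blast
          thus ?thesis by blast
        next
          case False
          hence "fst i \<inter> fst j = {}" using disj inD by blast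
          thus ?thesis by blast
        qed
      qed
    qed
    moreover have "card (?B q) = g q x z" for q unfolding g_def by (cases q) simp
    ultimately show ?thesis using e by simp
  qed
  have "g q x z = g q x' z'" if q: "q \<in> T1 \<times> T2" for q
  proof -
    obtain a b where qab: "q = (a,b)" by (cases q)
    have "a \<in> D" "b \<in> D" using q qab T by auto
    then obtain c where c: "\<forall>(x,z)\<in>t. card {y. (x,y) \<in> a \<and> (y,z) \<in> b} = c" using cst t by blast
    have "card {y. (x,y) \<in> a \<and> (y,z) \<in> b} = c" using c p(1) by fast
    moreover have "card {y. (x',y) \<in> a \<and> (y,z') \<in> b} = c" using c p(2) by fast
    ultimately show ?thesis unfolding g_def qab by simp
  qed
  hence "(\<Sum>q\<in>T1\<times>T2. g q x z) = (\<Sum>q\<in>T1\<times>T2. g q x' z')" by (rule sum.cong[OF refl])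
  thus ?thesis using dec by simp
qed

lemma scheme_rels_cc:
  fixes D :: "('a::finite \<times> 'a) set set"
  assumes sch: "is_scheme UNIV D" shows "cc (scheme_rels D)"
proof -
  have disj: "\<forall>r\<in>D. \<forall>s\<in>D. r \<noteq> s \<longrightarrow> r \<inter> s = {}" using sch_disj[OF sch] .
  have cov: "\<Union>D = UNIV" using sch_cov[OF sch] by (simp only: UNIV_Times_UNIV)
  have conv: "\<forall>r\<in>D. r\<inverse> \<in> D" using sch_conv[OF sch] .
  have idx: "\<exists>T\<subseteq>D. \<Union>T = Id_on UNIV" using sch_id[OF sch] .
  have memI: "\<And>T. T \<subseteq> D \<Longrightarrow> \<Union>T \<in> scheme_rels D" unfolding scheme_rels_def by blast
  have memE: "\<And>r. r \<in> scheme_rels D \<Longrightarrow> \<exists>T\<subseteq>D. r = \<Union>T" unfolding scheme_rels_def by blast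
  have c1: "{} \<in> scheme_rels D" using memI[of "{}"] by simp
  have c2: "Id \<in> scheme_rels D"
  proof -
    obtain T where T: "T \<subseteq> D" "\<Union>T = Id_on UNIV" using idx by blast
    have "\<Union>T = Id" using T(2) by (simp add: IdU)
    thus ?thesis using memI[OF T(1)] by simp
  qed
  have c3: "- r \<in> scheme_rels D" if hr: "r \<in> scheme_rels D" for r
  proof -
    obtain T where T: "T \<subseteq> D" "r = \<Union>T" using memE[OF hr] by blast
    have sub1: "- r \<subseteq> \<Union>(D - T)"
    proof
      fix p assume p: "p \<in> - r"
      have "p \<in> \<Union>D" using cov by simp
      then obtain s where s: "s \<in> D" "p \<in> s" by blast
      have "s \<notin> T" using s(2) p T(2) by blast
      thus "p \<in> \<Union>(D - T)" using s by blast
    qed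
    have sub2: "\<Union>(D - T) \<subseteq> - r"
    proof
      fix p assume "p \<in> \<Union>(D - T)"
      then obtain s' where s': "s' \<in> D" "s' \<notin> T" "p \<in> s'" by blast
      have "p \<notin> \<Union>T"
      proof
        assume "p \<in> \<Union>T"
        then obtain u where u: "u \<in> T" "p \<in> u" by blast
        have uD: "u \<in> D" using u(1) T(1) by blast
        have "u \<noteq> s'" using u(1) s'(2) by metis
        hence "u \<inter> s' = {}" using disj uD s'(1) by blast
        thus False using u(2) s'(3) by blast
      qed
      thus "p \<in> - r" using T(2) by simp
    qed
    have "- r = \<Union>(D - T)" using sub1 sub2 by (rule equalityI)
    moreover have "\<Union>(D - T) \<in> scheme_rels D" using memI[of "D - T"] by blast
    ultimately show ?thesis by simp
  qed
  have c4: "r \<union> s \<in> scheme_rels D" if hr: "r \<in> scheme_rels D" and hs: "s \<in> scheme_rels D" for r s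
  proof -
    obtain T where T: "T \<subseteq> D" "r = \<Union>T" using memE[OF hr] by blast
    obtain T' where T': "T' \<subseteq> D" "s = \<Union>T'" using memE[OF hs] by blast
    show ?thesis using memI[of "T \<union> T'"] T T' by simp
  qed
  have c5: "r\<inverse> \<in> scheme_rels D" if hr: "r \<in> scheme_rels D" for r
  proof -
    obtain T where T: "T \<subseteq> D" "r = \<Union>T" using memE[OF hr] by blast
    have "r\<inverse> = \<Union>(converse ` T)" using T by auto
    moreover have "converse ` T \<subseteq> D" using T conv by auto
    ultimately show ?thesis using memI by simp
  qed
  have c6: "cnt r s k \<in> scheme_rels D" if hr: "r \<in> scheme_rels D" and hs: "s \<in> scheme_rels D" for r s k
  proof -
    obtain T where T: "T \<subseteq> D" "r = \<Union>T" using memE[OF hr] by blast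
    obtain T' where T': "T' \<subseteq> D" "s = \<Union>T'" using memE[OF hs] by blast
    have memc: "(x,z) \<in> cnt r s k \<longleftrightarrow> card {y. (x,y) \<in> \<Union>T \<and> (y,z) \<in> \<Union>T'} = k" for x z
      unfolding cnt_def T(2) T'(2) by simp
    have key: "(x',z') \<in> cnt r s k" if "t \<in> D" "(x,z) \<in> t" "(x',z') \<in> t" "(x,z) \<in> cnt r s k" for t x z x' z'
    proof -
      have "card {y. (x,y) \<in> \<Union>T \<and> (y,z) \<in> \<Union>T'} = card {y. (x',y) \<in> \<Union>T \<and> (y,z') \<in> \<Union>T'}"
        using count_const[OF sch T(1) T'(1) that(1) that(2) that(3)] .
      thus ?thesis using that(4) unfolding memc by simp
    qed
    have sub: "cnt r s k \<subseteq> \<Union>{t \<in> D. t \<subseteq> cnt r s k}"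
    proof (rule subrelI)
      fix x z assume p: "(x,z) \<in> cnt r s k"
      have "(x,z) \<in> \<Union>D" using cov by simp
      then obtain t where t: "t \<in> D" "(x,z) \<in> t" by blast
      have "t \<subseteq> cnt r s k"
      proof (rule subrelI)
        fix x' z' assume "(x',z') \<in> t"
        thus "(x',z') \<in> cnt r s k" using key[OF t(1) t(2) _ p] by blast
      qed
      thus "(x,z) \<in> \<Union>{t \<in> D. t \<subseteq> cnt r s k}" using t by blast
    qed
    have "cnt r s k = \<Union>{t \<in> D. t \<subseteq> cnt r s k}"
      using sub by (rule equalityI) blast
    moreover have "\<Union>{t \<in> D. t \<subseteq> cnt r s k} \<in> scheme_rels D"
      using memI[of "{t \<in> D. t \<subseteq> cnt r s k}"] by blast
    ultimately show ?thesis by simp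
  qed
  show ?thesis unfolding cc_def using c1 c2 by (simp add: c3 c4 c5 c6)
qed

lemma atoms_scheme:
  fixes D :: "('a::finite \<times> 'a) set set"
  assumes sch: "is_scheme UNIV D" shows "atoms (scheme_rels D) = D"
proof -
  have disj: "\<forall>r\<in>D. \<forall>s\<in>D. r \<noteq> s \<longrightarrow> r \<inter> s = {}" using sch_disj[OF sch] .
  have ne: "\<forall>r\<in>D. r \<noteq> {}" using sch_ne[OF sch] .
  have memI: "\<And>T. T \<subseteq> D \<Longrightarrow> \<Union>T \<in> scheme_rels D" unfolding scheme_rels_def by blast
  have memE: "\<And>r. r \<in> scheme_rels D \<Longrightarrow> \<exists>T\<subseteq>D. r = \<Union>T" unfolding scheme_rels_def by blast
  have sub1: "t \<in> D" if t: "t \<in> atoms (scheme_rels D)" for t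
  proof -
    have tr1: "t \<in> scheme_rels D" using t unfolding atoms_def by simp
    have tr2: "t \<noteq> {}" using t unfolding atoms_def by simp
    have tr3: "\<forall>s\<in>scheme_rels D. t \<subseteq> s \<or> t \<inter> s = {}" using t unfolding atoms_def by simp
    obtain T where T: "T \<subseteq> D" "t = \<Union>T" using memE[OF tr1] by blast
    obtain p where "p \<in> t" using tr2 by blast
    then obtain u where u: "u \<in> T" "p \<in> u" using T(2) by blast
    have uD: "u \<in> D" using u(1) T(1) by blast
    have "u \<in> scheme_rels D" using memI[of "{u}"] uD by simp
    hence "t \<subseteq> u \<or> t \<inter> u = {}" using tr3 by blast
    moreover have "u \<subseteq> t" using u(1) T(2) by blast
    ultimately have "t = u" using u(2) by blast
    thus "t \<in> D" using uD by simp
  qed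
  have sub2: "t \<in> atoms (scheme_rels D)" if t: "t \<in> D" for t
  proof -
    have "t \<in> scheme_rels D" using memI[of "{t}"] t by simp
    moreover have "t \<noteq> {}" using ne t by blast
    moreover have "\<forall>s\<in>scheme_rels D. t \<subseteq> s \<or> t \<inter> s = {}"
    proof
      fix s assume hs: "s \<in> scheme_rels D"
      obtain T where T: "T \<subseteq> D" "s = \<Union>T" using memE[OF hs] by blast
      show "t \<subseteq> s \<or> t \<inter> s = {}"
      proof (cases "t \<in> T")
        case True thus ?thesis using T(2) by blast
      next
        case False
        have "t \<inter> u = {}" if u: "u \<in> T" for u
        proof -
          have "u \<in> D" using u T(1) by blast
          moreover have "t \<noteq> u" using False u by metis
          ultimately show ?thesis using disj t by blast
        qed
        thus ?thesis using T(2) by blast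
      qed
    qed
    ultimately show "t \<in> atoms (scheme_rels D)" unfolding atoms_def by simp
  qed
  show ?thesis using sub1 sub2 by blast
qed

lemma ext_rels:
  fixes C :: "('a::finite \<times> 'a) set set" and E :: "('a \<times> 'a) set"
  shows "scheme_rels (scheme_ext UNIV C E) =
     \<Inter>{A. cc A \<and> scheme_rels C \<subseteq> A \<and> (\<forall>X\<in>UNIV // E. Id_on X \<in> A)}"
proof -
  define A0 where "A0 = \<Inter>{A. cc A \<and> scheme_rels C \<subseteq> A \<and> (\<forall>X\<in>UNIV // E. Id_on X \<in> A)}"
  have ccA0: "cc A0" unfolding A0_def cc_def by blast
  have genA0: "scheme_rels C \<subseteq> A0" "\<forall>X\<in>UNIV // E. Id_on X \<in> A0" unfolding A0_def by blast+
  define D0 where "D0 = atoms A0"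
  have relD0: "scheme_rels D0 = A0" unfolding D0_def using rels_atoms[OF ccA0] .
  let ?P = "\<lambda>D. is_scheme UNIV D \<and> scheme_le C D \<and>
      (\<forall>X\<in>UNIV // E. Id_on X \<in> scheme_rels D) \<and>
      (\<forall>D'. is_scheme UNIV D' \<and> scheme_le C D' \<and> (\<forall>X\<in>UNIV // E. Id_on X \<in> scheme_rels D')
             \<longrightarrow> scheme_le D D')"
  have min: "A0 \<subseteq> scheme_rels D'" if "is_scheme UNIV D'" "scheme_le C D'" "\<forall>X\<in>UNIV // E. Id_on X \<in> scheme_rels D'" for D'
  proof -
    have "cc (scheme_rels D')" using scheme_rels_cc[OF that(1)] .
    thus ?thesis using that(2,3) unfolding A0_def scheme_le_def by blast
  qed
  have PD0: "?P D0"
  proof (intro conjI allI impI)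
    show "is_scheme UNIV D0" unfolding D0_def using scheme_atoms[OF ccA0] .
    show "scheme_le C D0" unfolding scheme_le_def relD0 using genA0 by blast
    show "\<forall>X\<in>UNIV // E. Id_on X \<in> scheme_rels D0" unfolding relD0 using genA0 by blast
    fix D' assume "is_scheme UNIV D' \<and> scheme_le C D' \<and> (\<forall>X\<in>UNIV // E. Id_on X \<in> scheme_rels D')"
    hence "A0 \<subseteq> scheme_rels D'" using min by blast
    thus "scheme_le D0 D'" unfolding scheme_le_def relD0 .
  qed
  have uniq: "D = D0" if "?P D" for D
  proof -
    have "scheme_rels D \<subseteq> scheme_rels D0" using that PD0 unfolding scheme_le_def by blast
    moreover have "A0 \<subseteq> scheme_rels D" using that min by blast
    ultimately have "scheme_rels D = A0" using relD0 by blast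
    hence "atoms (scheme_rels D) = D0" unfolding D0_def by simp
    thus ?thesis using atoms_scheme that by metis
  qed
  have "scheme_ext UNIV C E = D0" unfolding scheme_ext_def
    using PD0 uniq by (rule the_equality)
  thus ?thesis using relD0 A0_def by simp
qed




lemma rad_max:
  assumes "local_ring TYPE('a::{comm_ring_1,finite})"
  shows "maximal_ideal (rad::'a set)"
  using assms unfolding local_ring_def rad_def by (rule theI')

lemma rad_uniq:
  assumes "local_ring TYPE('a::{comm_ring_1,finite})" "maximal_ideal (I::'a set)"
  shows "I = rad"
  using assms rad_max unfolding local_ring_def by blast

lemma ideal_one: "ring_ideal (I::'a::comm_ring_1 set) \<Longrightarrow> 1 \<in> I \<Longrightarrow> I = UNIV"
proof -
  assume a: "ring_ideal I" "1 \<in> I"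
  have "r \<in> I" for r using a unfolding ring_ideal_def by (metis mult.right_neutral)
  thus ?thesis by blast
qed

lemma in_rad:
  assumes loc: "local_ring TYPE('a::{comm_ring_1,finite})"
  shows "(x::'a) \<in> rad \<longleftrightarrow> \<not> x dvd 1"
proof
  assume xr: "x \<in> rad"
  show "\<not> x dvd 1"
  proof
    assume "x dvd 1"
    then obtain k where k: "1 = x * k" unfolding dvd_def by blast
    have mi: "ring_ideal (rad::'a set)" "(rad::'a set) \<noteq> UNIV" using rad_max[OF loc] unfolding maximal_ideal_def by auto
    have "k * x \<in> rad" using mi(1) xr unfolding ring_ideal_def by blast
    hence "1 \<in> (rad::'a set)" using k by (simp add: mult.commute)
    thus False using ideal_one mi by blast
  qed
next
  assume nu: "\<not> x dvd 1"
  let ?J = "range (\<lambda>y. x * y)"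
  have J: "ring_ideal ?J" unfolding ring_ideal_def
  proof (intro conjI ballI allI)
    show "0 \<in> ?J" by (metis mult_zero_right rangeI)
    fix a b assume "a \<in> ?J" "b \<in> ?J"
    then obtain a' b' where "a = x * a'" "b = x * b'" by blast
    thus "a + b \<in> ?J" by (metis distrib_left rangeI)
  next
    fix a assume "a \<in> ?J"
    then obtain a' where "a = x * a'" by blast
    thus "- a \<in> ?J" by (metis mult_minus_right rangeI)
  next
    fix r a assume "a \<in> ?J"
    then obtain a' where "a = x * a'" by blast
    thus "r * a \<in> ?J" by (metis mult.left_commute rangeI)
  qed
  have J1: "1 \<notin> ?J" using nu unfolding dvd_def by auto
  let ?S = "{I::'a set. ring_ideal I \<and> ?J \<subseteq> I \<and> 1 \<notin> I}"
  have "?J \<in> ?S" using J J1 by blast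
  moreover have "finite ?S" by simp
  ultimately obtain M where M: "M \<in> ?S" "\<forall>b\<in>?S. M \<le> b \<longrightarrow> M = b"
    using finite_has_maximal[of ?S] by blast
  have "maximal_ideal M" unfolding maximal_ideal_def
  proof (intro conjI allI impI)
    show "ring_ideal M" using M by blast
    show "M \<noteq> UNIV" using M by blast
    fix J' assume J': "ring_ideal J' \<and> M \<subseteq> J'"
    show "J' = M \<or> J' = UNIV"
    proof (cases "1 \<in> J'")
      case True thus ?thesis using ideal_one J' by blast
    next
      case False
      hence "J' \<in> ?S" using J' M by blast
      thus ?thesis using M J' by blast
    qed
  qed
  hence "M = rad" using rad_uniq[OF loc] by blast
  moreover have "x \<in> ?J" by (metis mult_1_right rangeI)
  ultimately show "x \<in> rad" using M by blast
qed




theorem theorem2p5: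
  fixes K :: "'a::{comm_ring_1, finite} set"
  assumes "local_ring TYPE('a)"
    and "unit_subgroup K"
    and "pure K"
  defines "I0 \<equiv> {x \<in> (rad :: 'a set). \<forall>y\<in>rad. x * y = 0}"
  defines "U0 \<equiv> K \<inter> (\<lambda>x. 1 + x) ` I0"
  defines "E0 \<equiv> {(x, y). y - x \<in> I0}"
  shows "scheme_le (Cyc U0) (scheme_ext UNIV (Cyc K) E0)"
proof -
  note loc = assms(1)
  have radI: "ring_ideal (rad::'a set)" using rad_max[OF loc] unfolding maximal_ideal_def by blast
  have rad_add: "a + b \<in> rad" if "a \<in> rad" "b \<in> rad" for a b :: 'a
    using radI that unfolding ring_ideal_def by blast
  have rad_neg: "- a \<in> rad" if "a \<in> rad" for a :: 'a
    using radI that unfolding ring_ideal_def by blast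
  have rad_mul: "r * a \<in> rad" if "a \<in> rad" for a r :: 'a
    using radI that unfolding ring_ideal_def by blast
  have rad_diff: "a - b \<in> rad" if "a \<in> rad" "b \<in> rad" for a b :: 'a
    using rad_add[OF that(1) rad_neg[OF that(2)]] by simp
  have unit_iff: "(x::'a) dvd 1 \<longleftrightarrow> x \<notin> rad" for x using in_rad[OF loc] by blast
  have K1: "1 \<in> K" and Kmul: "\<And>x y. x \<in> K \<Longrightarrow> y \<in> K \<Longrightarrow> x * y \<in> K"
    and Kinv: "\<And>x. x \<in> K \<Longrightarrow> \<exists>y\<in>K. x * y = 1"
    using assms(2) unfolding unit_subgroup_def by blast+
  have I0rad: "i \<in> rad" if "i \<in> I0" for i using that unfolding I0_def by blast
  have I0ann: "i * y = 0" if "i \<in> I0" "y \<in> rad" for i y using that unfolding I0_def by blast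
  have I0mul: "s * i \<in> I0" if "i \<in> I0" for i s
  proof -
    have "s * i \<in> rad" using rad_mul I0rad[OF that] by blast
    moreover have "(s * i) * y = 0" if "y \<in> rad" for y
      using I0ann[OF \<open>i \<in> I0\<close> that] by (simp add: mult.assoc)
    ultimately show ?thesis unfolding I0_def by blast
  qed
  have I0diff: "i - j \<in> I0" if "i \<in> I0" "j \<in> I0" for i j
  proof -
    have "i - j \<in> rad" using rad_diff I0rad that by blast
    moreover have "(i - j) * y = 0" if "y \<in> rad" for y
      using I0ann[OF \<open>i \<in> I0\<close> that] I0ann[OF \<open>j \<in> I0\<close> that] by (simp add: left_diff_distrib)
    ultimately show ?thesis unfolding I0_def by blast
  qed
  have I0zero: "0 \<in> I0"
  proof -
    have "(0::'a) \<in> rad" using radI unfolding ring_ideal_def by blast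
    thus ?thesis unfolding I0_def by simp
  qed
  define I1 where "I1 = {i \<in> I0. 1 + i \<in> K}"
  have I1zero: "0 \<in> I1" unfolding I1_def using I0zero K1 by simp
  have I1diff: "i - j \<in> I1" if "i \<in> I1" "j \<in> I1" for i j
  proof -
    have i: "i \<in> I0" "1 + i \<in> K" and j: "j \<in> I0" "1 + j \<in> K" using that unfolding I1_def by auto
    obtain v where v: "v \<in> K" "(1 + j) * v = 1" using Kinv[OF j(2)] by blast
    have jj: "j * j = 0" using I0ann[OF j(1) I0rad[OF j(1)]] .
    have ij: "i * j = 0" using I0ann[OF i(1) I0rad[OF j(1)]] .
    have "(1 - j) * (1 + j) = 1" using jj by (simp add: algebra_simps)
    hence "1 - j = v"
      by (metis v(2) mult.assoc mult.left_neutral mult.right_neutral mult.commute)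
    hence mj: "1 - j \<in> K" using v(1) by simp
    have "(1 + i) * (1 - j) = 1 + (i - j)" using ij by (simp add: algebra_simps)
    hence "1 + (i - j) \<in> K" using Kmul[OF i(2) mj] by simp
    thus ?thesis unfolding I1_def using I0diff[OF i(1) j(1)] by simp
  qed
  have I1add: "i + j \<in> I1" if "i \<in> I1" "j \<in> I1" for i j
    using I1diff[OF that(1) I1diff[OF I1zero that(2)]] by simp
  have U0_iff: "k \<in> U0 \<longleftrightarrow> (\<exists>i\<in>I1. k = 1 + i)" for k
    unfolding U0_def I1_def by auto
  define W where "W = {w::'a. \<forall>a. a dvd 1 \<longrightarrow> (\<exists>i\<in>I1. w = a * i)}"
  have W_I: "w \<in> W" if "\<And>a. a dvd 1 \<Longrightarrow> \<exists>i\<in>I1. w = a * i" for w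
    using that unfolding W_def by blast
  have W_E: "\<exists>i\<in>I1. w = a * i" if "w \<in> W" "a dvd 1" for w a
    using that unfolding W_def by blast
  have W_zero: "0 \<in> W"
  proof (rule W_I)
    fix a :: 'a
    have "(0::'a) = a * 0" by simp
    thus "\<exists>i\<in>I1. 0 = a * i" using I1zero by blast
  qed
  have W0: "w = 0" if "w \<in> W" for w
  proof -
    have WI: "ring_ideal W" unfolding ring_ideal_def
    proof (intro conjI ballI allI)
      show "0 \<in> W" by (rule W_zero)
    next
      fix x y assume x: "x \<in> W" and y: "y \<in> W"
      show "x + y \<in> W" 
      proof (rule W_I)
        fix a :: 'a assume a: "a dvd 1"
        obtain i where i: "i \<in> I1" "x = a * i" using W_E[OF x a] by blast
        obtain j where j: "j \<in> I1" "y = a * j" using W_E[OF y a] by blast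
        have "x + y = a * (i + j)" using i j by (simp add: distrib_left)
        thus "\<exists>i\<in>I1. x + y = a * i" using I1add[OF i(1) j(1)] by blast
      qed
    next
      fix x assume x: "x \<in> W"
      show "- x \<in> W" 
      proof (rule W_I)
        fix a :: 'a assume a: "a dvd 1"
        obtain i where i: "i \<in> I1" "x = a * i" using W_E[OF x a] by blast
        have "- x = a * (0 - i)" using i by simp
        thus "\<exists>i\<in>I1. - x = a * i" using I1diff[OF I1zero i(1)] by blast
      qed
    next
      fix r x assume x: "x \<in> W"
      show "r * x \<in> W"
      proof (cases "r dvd 1")
        case True
        then obtain r' where r': "1 = r * r'" unfolding dvd_def by blast
        have r'u: "r' dvd 1" using r' by (metis dvdI mult.commute)
        show ?thesis 
        proof (rule W_I)
          fix a :: 'a assume a: "a dvd 1"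
          have "a * r' dvd 1 * 1" using mult_dvd_mono[OF a r'u] .
          hence "a * r' dvd 1" by simp
          then obtain i where i: "i \<in> I1" "x = (a * r') * i" using W_E[OF x] by blast
          have "r * x = (r * r') * a * i" using i by (simp add: algebra_simps)
          also have "\<dots> = a * i" using r' by simp
          finally show "\<exists>i\<in>I1. r * x = a * i" using i(1) by blast
        qed
      next
        case False
        hence rr: "r \<in> rad" using unit_iff by blast
        obtain i where i: "i \<in> I1" "x = 1 * i" using W_E[OF x one_dvd] by blast
        have "i \<in> I0" using i(1) unfolding I1_def by blast
        hence "r * x = 0" using I0ann[OF _ rr] i(2) by (simp add: mult.commute)
        moreover have "0 \<in> W" by (rule W_zero)
        ultimately show ?thesis by simp
      qed
    qed
    have "(\<lambda>x. 1 + x) ` W \<subseteq> K"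
    proof
      fix z assume "z \<in> (\<lambda>x. 1 + x) ` W"
      then obtain w where w: "w \<in> W" "z = 1 + w" by blast
      obtain i where "i \<in> I1" "w = 1 * i" using W_E[OF w(1) one_dvd] by blast
      thus "z \<in> K" using w(2) unfolding I1_def by simp
    qed
    moreover have "\<forall>I. ring_ideal I \<and> (\<lambda>x. 1 + x) ` I \<subseteq> K \<longrightarrow> I = {0}"
      using assms(3) unfolding pure_def .
    ultimately have "W = {0}" using WI by blast
    thus ?thesis using that by blast
  qed
  define Ru where "Ru s = {(x,y). y - x \<in> (\<lambda>k. s * k) ` U0}" for s :: 'a
  have Ru_mem: "(x,y) \<in> Ru s \<longleftrightarrow> (\<exists>i\<in>I1. y - x = s * (1 + i))" for x y s
    unfolding Ru_def using U0_iff by auto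
  have one_U: "\<exists>i\<in>I1. (1::'a) = 1 + i" using I1zero by force
  have Ru_unit: "Ru s = {(x,y). y - x \<in> (\<lambda>k. s * k) ` K} \<inter> {(x,y). y - x - s \<in> I0}"
    if su: "s dvd 1" for s
  proof -
    obtain s' where s': "1 = s * s'" using su unfolding dvd_def by blast
    show ?thesis
    proof (rule equalityI; rule subrelI)
      fix x y assume "(x,y) \<in> Ru s"
      then obtain i where i: "i \<in> I1" "y - x = s * (1 + i)" using Ru_mem by blast
      have iK: "1 + i \<in> K" "i \<in> I0" using i(1) unfolding I1_def by auto
      have "y - x - s = s * i" using i(2) by (simp add: algebra_simps)
      hence "y - x - s \<in> I0" using I0mul[OF iK(2)] by simp
      moreover have "y - x \<in> (\<lambda>k. s * k) ` K" using i(2) iK(1) by blast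
      ultimately show "(x,y) \<in> {(x,y). y - x \<in> (\<lambda>k. s * k) ` K} \<inter> {(x,y). y - x - s \<in> I0}" by simp
    next
      fix x y assume "(x,y) \<in> {(x,y). y - x \<in> (\<lambda>k. s * k) ` K} \<inter> {(x,y). y - x - s \<in> I0}"
      hence h1: "y - x \<in> (\<lambda>k. s * k) ` K" and h2: "y - x - s \<in> I0" by auto
      obtain k where k: "k \<in> K" "y - x = s * k" using h1 by blast
      have "s' * (y - x - s) = (s * s') * k - s * s'" using k(2) by (simp add: algebra_simps)
      hence "k - 1 = s' * (y - x - s)" using s' by simp
      hence km: "k - 1 \<in> I0" using I0mul[OF h2] by simp
      have "1 + (k - 1) \<in> K" using k(1) by simp
      hence "k - 1 \<in> I1" using km unfolding I1_def by simp
      moreover have "y - x = s * (1 + (k - 1))" using k(2) by simp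
      ultimately show "(x,y) \<in> Ru s" using Ru_mem by blast
    qed
  qed
  have Ru_rad: "Ru s = \<Inter>((\<lambda>a. Ru a O Ru (s - a)) ` {a. a dvd 1})" if sr: "s \<in> rad" for s
  proof -
    have Ru_eq: "(x,y) \<in> Ru s \<longleftrightarrow> y - x = s" for x y
    proof
      assume "(x,y) \<in> Ru s"
      then obtain i where i: "i \<in> I1" "y - x = s * (1 + i)" using Ru_mem by blast
      have "i \<in> I0" using i(1) unfolding I1_def by simp
      hence "i * s = 0" using I0ann sr by blast
      thus "y - x = s" using i(2) by (simp add: algebra_simps)
    next
      assume "y - x = s"
      thus "(x,y) \<in> Ru s" using Ru_mem one_U by force
    qed
    show ?thesis
    proof (rule equalityI; rule subrelI)
      fix x z assume "(x,z) \<in> Ru s"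
      hence xz: "z - x = s" using Ru_eq by blast
      show "(x,z) \<in> \<Inter>((\<lambda>a. Ru a O Ru (s - a)) ` {a. a dvd 1})"
      proof (rule InterI)
        fix R assume "R \<in> (\<lambda>a. Ru a O Ru (s - a)) ` {a. a dvd 1}"
        then obtain a where R: "R = Ru a O Ru (s - a)" by blast
        have "(x, x + a) \<in> Ru a" using Ru_mem one_U by force
        moreover have "(x + a, z) \<in> Ru (s - a)"
        proof -
          have "z - (x + a) = (s - a) * 1" using xz by (simp add: algebra_simps)
          thus ?thesis using Ru_mem one_U by force
        qed
        ultimately show "(x,z) \<in> R" using R by blast
      qed
    next
      fix x z assume H: "(x,z) \<in> \<Inter>((\<lambda>a. Ru a O Ru (s - a)) ` {a. a dvd 1})"
      have "z - x - s \<in> W"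
      proof (rule W_I)
        fix a :: 'a assume a: "a dvd 1"
        have "(x,z) \<in> Ru a O Ru (s - a)" using H a by blast
        then obtain y where y1: "(x,y) \<in> Ru a" and y2: "(y,z) \<in> Ru (s - a)" by blast
        obtain i where i: "i \<in> I1" "y - x = a * (1 + i)" using y1 Ru_mem by blast
        obtain j where j: "j \<in> I1" "z - y = (s - a) * (1 + j)" using y2 Ru_mem by blast
        have "j \<in> I0" using j(1) unfolding I1_def by simp
        hence js: "j * s = 0" using I0ann sr by blast
        have "z - x - s = (z - y) + (y - x) - s" by simp
        also have "\<dots> = (s - a) * (1 + j) + a * (1 + i) - s" using i(2) j(2) by simp
        also have "\<dots> = a * (i - j) + j * s" by (simp add: algebra_simps)
        also have "\<dots> = a * (i - j)" using js by simp
        finally show "\<exists>i\<in>I1. z - x - s = a * i" using I1diff[OF i(1) j(1)] by blast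
      qed
      hence "z - x - s = 0" using W0 by blast
      hence "z - x = s" by simp
      thus "(x,z) \<in> Ru s" using Ru_eq by blast
    qed
  qed
  have main: "scheme_rels (Cyc U0) \<subseteq> A"
    if ccA: "cc A" and g1: "scheme_rels (Cyc K) \<subseteq> A" and g2: "\<forall>X\<in>UNIV // E0. Id_on X \<in> A" for A
  proof -
    have RK: "{(x,y). y - x \<in> (\<lambda>k. s * k) ` K} \<in> A" for s
    proof -
      have "{(x,y). y - x \<in> (\<lambda>k. s * k) ` K} \<in> Cyc K" unfolding Cyc_def by blast
      hence "\<Union>{{(x,y). y - x \<in> (\<lambda>k. s * k) ` K}} \<in> scheme_rels (Cyc K)"
        unfolding scheme_rels_def by blast
      thus ?thesis using g1 by auto
    qed
    have cls: "Id_on {y. y - b \<in> I0} \<in> A" for b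
    proof -
      have "E0 `` {b} = {y. y - b \<in> I0}" unfolding E0_def by auto
      moreover have "E0 `` {b} \<in> UNIV // E0" by (rule quotientI) simp
      ultimately show ?thesis using g2 by metis
    qed
    have SA: "{(x,y). y - x - a \<in> I0} \<in> A" for a
    proof -
      let ?F = "range (\<lambda>b. (Id_on {y. y - b \<in> I0} O UNIV) O Id_on {y. y - (b + a) \<in> I0})"
      have FA: "?F \<subseteq> A"
      proof
        fix R assume "R \<in> ?F"
        then obtain b where R: "R = (Id_on {y. y - b \<in> I0} O UNIV) O Id_on {y. y - (b + a) \<in> I0}" by blast
        show "R \<in> A" unfolding R
          using cc_comp[OF ccA cc_comp[OF ccA cls cc_univ[OF ccA]] cls] .
      qed
      have "{(x,y). y - x - a \<in> I0} = \<Union>?F"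
      proof (rule equalityI; rule subrelI)
        fix x y assume "(x,y) \<in> {(x,y). y - x - a \<in> I0}"
        hence h: "y - x - a \<in> I0" by simp
        have "(x,x) \<in> Id_on {y. y - x \<in> I0}" using I0zero by (intro Id_onI) simp
        moreover have "(x,y) \<in> UNIV" by simp
        moreover have "(y,y) \<in> Id_on {y. y - (x + a) \<in> I0}"
          using h by (intro Id_onI) (simp add: algebra_simps)
        ultimately have "(x,y) \<in> (Id_on {y. y - x \<in> I0} O UNIV) O Id_on {y. y - (x + a) \<in> I0}" by blast
        thus "(x,y) \<in> \<Union>?F" by blast
      next
        fix x y assume "(x,y) \<in> \<Union>?F"
        then obtain b where "(x,y) \<in> (Id_on {y. y - b \<in> I0} O UNIV) O Id_on {y. y - (b + a) \<in> I0}" by blast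
        hence hx: "x - b \<in> I0" and hy: "y - (b + a) \<in> I0" by auto
        have e: "y - x - a = (y - (b + a)) - (x - b)" by (simp add: algebra_simps)
        have "y - x - a \<in> I0" by (subst e) (rule I0diff[OF hy hx])
        thus "(x,y) \<in> {(x,y). y - x - a \<in> I0}" by simp
      qed
      thus ?thesis using cc_Union[OF ccA FA] by simp
    qed
    have RuU: "Ru s \<in> A" if "s dvd 1" for s
      using Ru_unit[OF that] cc_int[OF ccA RK SA] by simp
    have RuA: "Ru s \<in> A" for s
    proof (cases "s dvd 1")
      case True thus ?thesis using RuU by blast
    next
      case False
      hence sr: "s \<in> rad" using unit_iff by blast
      have "(\<lambda>a. Ru a O Ru (s - a)) ` {a. a dvd 1} \<subseteq> A"
      proof
        fix R assume "R \<in> (\<lambda>a. Ru a O Ru (s - a)) ` {a. a dvd 1}"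
        then obtain a where a: "a dvd 1" "R = Ru a O Ru (s - a)" by blast
        have "s - a \<notin> rad"
        proof
          assume "s - a \<in> rad"
          hence "s - (s - a) \<in> rad" using rad_diff[OF sr] by blast
          thus False using a(1) unit_iff by simp
        qed
        hence "s - a dvd 1" using unit_iff by blast
        thus "R \<in> A" using a cc_comp[OF ccA RuU[OF a(1)] RuU] by blast
      qed
      thus ?thesis using Ru_rad[OF sr] cc_Inter[OF ccA] by simp
    qed
    have "Cyc U0 \<subseteq> A"
    proof
      fix R assume "R \<in> Cyc U0"
      then obtain r where "R = {(x,y). y - x \<in> (\<lambda>k. r * k) ` U0}" unfolding Cyc_def by blast
      hence "R = Ru r" unfolding Ru_def by simp
      thus "R \<in> A" using RuA by simp
    qed
    thus ?thesis unfolding scheme_rels_def using cc_Union[OF ccA] by blast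
  qed
  show ?thesis unfolding scheme_le_def ext_rels using main by blast
qed


end
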